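(* Let $\mathsf V=(\mathsf V,\otimes,k)$ be a quantale in which $k=\top$ is the top element, and assume there is a sequence $(u_n)_{n\in\mathbb N}$ in $\mathsf V$ such that $\bigvee_{n\in\mathbb N}u_n=k$, $u_n\ll k$ for all $n$, and $u_n\le u_{n+1}$ for all $n$. Let $X=(X,a)$ be a $\mathsf V$-category. Then for every adjunction $\varphi\dashv\psi$ with $\varphi:E\rightharpoonup X$ and $\psi:X\rightharpoonup E$ there is a Cauchy sequence $s$ in $X$ with $\varphi=\varphi_s$ and $\psi=\psi_s$. Consequently, $X$ is Cauchy complete if and only if every Cauchy sequence in $X$ converges.
   Context: A quantale $\mathsf V=(\mathsf V,\otimes,k)$ is a complete anti-symmetric lattice with an associative, commutative binary operation $\otimes$ with neutral element $k$ such that $u\otimes\bigvee_{i}v_i=\bigvee_i(u\otimes v_i)$ for all families; $\hom(u,-)$ denotes the right adjoint of $u\otimes-$. For $u,x\in\mathsf V$, $u\ll x$ ($u$ is totally below $x$) means: for every $S\subseteq\mathsf V$ with $x\le\bigvee S$ there is $s\in S$ with $u\le s$. A $\mathsf V$-category $X=(X,a)$ is a set with $a:X\times X\to\mathsf V$ such that $k\le a(x,x)$ and $a(x,y)\otimes a(y,z)\le a(x,z)$. A $\mathsf V$-module $\varphi:(X,a)\rightharpoonup(Y,b)$ is a map $\varphi:X\times Y\to\mathsf V$ with $a(x,x')\otimes\varphi(x',y)\le\varphi(x,y)$ and $\varphi(x,y)\otimes b(y,y')\le\varphi(x,y')$; composition is $(\psi\cdot\varphi)(x,z)=\bigvee_{y}\varphi(x,y)\otimes\psi(y,z)$,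 modules are ordered pointwise, and $\varphi\dashv\psi$ (for $\psi:Y\rightharpoonup X$) means $a\le\psi\cdot\varphi$ and $\varphi\cdot\psi\le b$. $E=(\{\star\},k)$ is the one-point $\mathsf V$-category with $k(\star,\star)=k$; modules $E\rightharpoonup X$ and $X\rightharpoonup E$ are identified with maps $X\to\mathsf V$. For $x\in X$, $x_*:E\rightharpoonup X$ is $y\mapsto a(x,y)$ and $x^*:X\rightharpoonup E$ is $y\mapsto a(y,x)$. $X$ is Cauchy complete if every left adjoint module $\varphi:E\rightharpoonup X$ is of the form $x_*$ for some $x\in X$. For a sequence $s=(x_n)$ in $X$, $\mathrm{Cauchy}(s)=\bigvee_{N}\bigwedge_{n,m\ge N}a(x_n,x_m)$, and $s$ is Cauchy if $k\le\mathrm{Cauchy}(s)$; $\varphi_s(x)=\bigvee_N\bigwedge_{n\ge N}a(x_n,x)$ and $\psi_s(x)=\bigvee_N\bigwedge_{n\ge N}a(x,x_n)$. For $M\subseteq X$, the closure is $\overline M=\{x\in X\mid k\le\bigvee_{y\in M}a(x,y)\otimes a(y,x)\}$; a sequence $s$ converges to $x$ if $x\in\overline{\{x_n\mid n\in M\}}$ for every infinite $M\subseteq\mathbb N$. *)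

theory Defs
  imports Main
begin

definition quantale :: "('v::complete_lattice \<Rightarrow> 'v \<Rightarrow> 'v) \<Rightarrow> 'v \<Rightarrow> bool" where
  "quantale t k \<longleftrightarrow>
     (\<forall>u v w. t (t u v) w = t u (t v w)) \<and>
     (\<forall>u v. t u v = t v u) \<and>
     (\<forall>u. t k u = u) \<and>
     (\<forall>u S. t u (Sup S) = Sup (t u ` S))"

definition totally_below :: "'v::complete_lattice \<Rightarrow> 'v \<Rightarrow> bool" where
  "totally_below u x \<longleftrightarrow> (\<forall>S. x \<le> Sup S \<longrightarrow> (\<exists>s\<in>S. u \<le> s))"

definition vcat :: "('v::complete_lattice \<Rightarrow> 'v \<Rightarrow> 'v) \<Rightarrow> 'v \<Rightarrow> 'x set \<Rightarrow> ('x \<Rightarrow> 'x \<Rightarrow> 'v) \<Rightarrow> bool" where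
  "vcat t k X a \<longleftrightarrow> (\<forall>x\<in>X. k \<le> a x x) \<and>
     (\<forall>x\<in>X. \<forall>y\<in>X. \<forall>z\<in>X. t (a x y) (a y z) \<le> a x z)"

text \<open>A V-module E \<rightharpoonup> X, identified with a map X \<rightarrow> V.\<close>
definition module_from_E :: "('v::complete_lattice \<Rightarrow> 'v \<Rightarrow> 'v) \<Rightarrow> 'v \<Rightarrow> 'x set \<Rightarrow> ('x \<Rightarrow> 'x \<Rightarrow> 'v) \<Rightarrow> ('x \<Rightarrow> 'v) \<Rightarrow> bool" where
  "module_from_E t k X a phi \<longleftrightarrow> (\<forall>y\<in>X. t k (phi y) \<le> phi y) \<and>
     (\<forall>y\<in>X. \<forall>y'\<in>X. t (phi y) (a y y') \<le> phi y')"

text \<open>A V-module X \<rightharpoonup> E, identified with a map X \<rightarrow> V.\<close>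
definition module_to_E :: "('v::complete_lattice \<Rightarrow> 'v \<Rightarrow> 'v) \<Rightarrow> 'v \<Rightarrow> 'x set \<Rightarrow> ('x \<Rightarrow> 'x \<Rightarrow> 'v) \<Rightarrow> ('x \<Rightarrow> 'v) \<Rightarrow> bool" where
  "module_to_E t k X a psi \<longleftrightarrow> (\<forall>x\<in>X. \<forall>x'\<in>X. t (a x x') (psi x') \<le> psi x) \<and>
     (\<forall>x\<in>X. t (psi x) k \<le> psi x)"

text \<open>Adjunction phi \<stileturn> psi of modules phi : E \<rightharpoonup> X and psi : X \<rightharpoonup> E:
  k \<le> psi \<cdot> phi and phi \<cdot> psi \<le> a.\<close>
definition adjoint :: "('v::complete_lattice \<Rightarrow> 'v \<Rightarrow> 'v) \<Rightarrow> 'v \<Rightarrow> 'x set \<Rightarrow> ('x \<Rightarrow> 'x \<Rightarrow> 'v) \<Rightarrow> ('x \<Rightarrow> 'v) \<Rightarrow> ('x \<Rightarrow> 'v) \<Rightarrow> bool" where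
  "adjoint t k X a phi psi \<longleftrightarrow>
     module_from_E t k X a phi \<and> module_to_E t k X a psi \<and>
     k \<le> (SUP y\<in>X. t (phi y) (psi y)) \<and>
     (\<forall>x\<in>X. \<forall>y\<in>X. t (psi x) (phi y) \<le> a x y)"

definition cauchy_complete :: "('v::complete_lattice \<Rightarrow> 'v \<Rightarrow> 'v) \<Rightarrow> 'v \<Rightarrow> 'x set \<Rightarrow> ('x \<Rightarrow> 'x \<Rightarrow> 'v) \<Rightarrow> bool" where
  "cauchy_complete t k X a \<longleftrightarrow>
     (\<forall>phi. (\<exists>psi. adjoint t k X a phi psi) \<longrightarrow> (\<exists>x\<in>X. \<forall>y\<in>X. phi y = a x y))"

definition cauchy_val :: "('x \<Rightarrow> 'x \<Rightarrow> 'v::complete_lattice) \<Rightarrow> (nat \<Rightarrow> 'x) \<Rightarrow> 'v" where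
  "cauchy_val a s = (SUP N. INF p\<in>{(n, m). N \<le> n \<and> N \<le> m}. a (s (fst p)) (s (snd p)))"

definition is_cauchy :: "'v::complete_lattice \<Rightarrow> ('x \<Rightarrow> 'x \<Rightarrow> 'v) \<Rightarrow> (nat \<Rightarrow> 'x) \<Rightarrow> bool" where
  "is_cauchy k a s \<longleftrightarrow> k \<le> cauchy_val a s"

definition phi_seq :: "('x \<Rightarrow> 'x \<Rightarrow> 'v::complete_lattice) \<Rightarrow> (nat \<Rightarrow> 'x) \<Rightarrow> 'x \<Rightarrow> 'v" where
  "phi_seq a s x = (SUP N. INF n\<in>{N..}. a (s n) x)"

definition psi_seq :: "('x \<Rightarrow> 'x \<Rightarrow> 'v::complete_lattice) \<Rightarrow> (nat \<Rightarrow> 'x) \<Rightarrow> 'x \<Rightarrow> 'v" where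
  "psi_seq a s x = (SUP N. INF n\<in>{N..}. a x (s n))"

definition vclosure :: "('v::complete_lattice \<Rightarrow> 'v \<Rightarrow> 'v) \<Rightarrow> 'v \<Rightarrow> 'x set \<Rightarrow> ('x \<Rightarrow> 'x \<Rightarrow> 'v) \<Rightarrow> 'x set \<Rightarrow> 'x set" where
  "vclosure t k X a M = {x\<in>X. k \<le> (SUP y\<in>M. t (a x y) (a y x))}"

definition converges_to :: "('v::complete_lattice \<Rightarrow> 'v \<Rightarrow> 'v) \<Rightarrow> 'v \<Rightarrow> 'x set \<Rightarrow> ('x \<Rightarrow> 'x \<Rightarrow> 'v) \<Rightarrow> (nat \<Rightarrow> 'x) \<Rightarrow> 'x \<Rightarrow> bool" where
  "converges_to t k X a s x \<longleftrightarrow> (\<forall>M. infinite M \<longrightarrow> x \<in> vclosure t k X a (s ` M))"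

end

theory Submission
  imports Defs
begin


context
  fixes t :: "'v::complete_lattice \<Rightarrow> 'v \<Rightarrow> 'v"
  assumes Q: "quantale t top"
begin

lemma tc: "t u v = t v u" using Q unfolding quantale_def by blast
lemma tid1: "t top v = v" using Q unfolding quantale_def by blast
lemma tid2: "t v top = v" using tc tid1 by metis
lemma tdist: "t u (SUP i\<in>I. f i) = (SUP i\<in>I. t u (f i))"
proof -
  have "t u (Sup (f ` I)) = Sup (t u ` f ` I)" using Q unfolding quantale_def by blast
  then show ?thesis by (simp add: image_image)
qed
lemma tdist2: "t (SUP i\<in>I. f i) v = (SUP i\<in>I. t (f i) v)"
  using tdist[of v f I] tc by simp
lemma tmono1: "v \<le> w \<Longrightarrow> t u v \<le> t u w"
proof -
  assume "v \<le> w"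
  then have "w = (SUP i\<in>{v,w}. i)" by (simp add: sup_absorb2)
  then have "t u w = (SUP i\<in>{v,w}. t u i)" using tdist[of u "\<lambda>i. i" "{v,w}"] by simp
  then show ?thesis by (simp add: le_iff_sup)
qed
lemma tmono: "v \<le> w \<Longrightarrow> u \<le> u' \<Longrightarrow> t u v \<le> t u' w"
  by (metis tmono1 tc order_trans)
lemma tle1: "t u v \<le> u" using tmono1[of v top u] tid2 by simp
lemma tle2: "t u v \<le> v" using tle1 tc by metis

lemma seqtop:
  fixes c :: "nat \<Rightarrow> 'v"
  assumes inc: "mono c" and sup: "(SUP n. c n) = top"
  shows "(SUP n. t (c n) (c n)) = top"
proof -
  have "top = t (SUP n. c n) (SUP m. c m)" using sup tid1 by simp
  also have "\<dots> = (SUP n. SUP m. t (c n) (c m))" by (simp only: tdist2) (simp only: tdist)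
  also have "\<dots> \<le> (SUP n. t (c n) (c n))"
  proof (intro SUP_least)
    fix n m
    have "t (c n) (c m) \<le> t (c (max n m)) (c (max n m))"
      by (intro tmono; rule monoD[OF inc]; simp)
    also have "\<dots> \<le> (SUP n. t (c n) (c n))" by (rule SUP_upper) simp
    finally show "t (c n) (c m) \<le> (SUP n. t (c n) (c n))" .
  qed
  finally show ?thesis by (simp add: top_le)
qed

lemma part1:
  fixes u :: "nat \<Rightarrow> 'v" and a :: "'x \<Rightarrow> 'x \<Rightarrow> 'v"
  assumes usup: "(SUP n. u n) = top" and utb: "\<forall>n. totally_below (u n) top"
    and umono: "mono u" and V: "vcat t top X a"
    and adj: "adjoint t top X a phi psi"
  shows "\<exists>s. range s \<subseteq> X \<and> is_cauchy top a s \<and>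
                 (\<forall>x\<in>X. phi x = phi_seq a s x) \<and> (\<forall>x\<in>X. psi x = psi_seq a s x)"
proof -
  have mf: "\<forall>y\<in>X. \<forall>y'\<in>X. t (phi y) (a y y') \<le> phi y'"
    and mt: "\<forall>x\<in>X. \<forall>x'\<in>X. t (a x x') (psi x') \<le> psi x"
    and ks: "top \<le> (SUP y\<in>X. t (phi y) (psi y))"
    and co: "\<forall>x\<in>X. \<forall>y\<in>X. t (psi x) (phi y) \<le> a x y"
    using adj unfolding adjoint_def module_from_E_def module_to_E_def by auto
  have "\<forall>n. \<exists>y\<in>X. u n \<le> t (phi y) (psi y)"
  proof
    fix n
    from utb have "\<forall>S. top \<le> Sup S \<longrightarrow> (\<exists>s\<in>S. u n \<le> s)" unfolding totally_below_def by blast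
    from this[rule_format, OF ks] show "\<exists>y\<in>X. u n \<le> t (phi y) (psi y)" by blast
  qed
  then obtain s where sX: "\<And>n. s n \<in> X" and su: "\<And>n. u n \<le> t (phi (s n)) (psi (s n))"
    by metis
  have uphi: "u n \<le> phi (s n)" for n using su[of n] tle1 order_trans by blast
  have upsi: "u n \<le> psi (s n)" for n using su[of n] tle2 order_trans by blast
  have cau: "is_cauchy top a s"
    unfolding is_cauchy_def cauchy_val_def
  proof -
    have "top = (SUP N. t (u N) (u N))" using seqtop[OF umono usup] by simp
    also have "\<dots> \<le> (SUP N. INF p\<in>{(n, m). N \<le> n \<and> N \<le> m}. a (s (fst p)) (s (snd p)))"
    proof (rule SUP_mono')
      fix N
      show "t (u N) (u N) \<le> (INF p\<in>{(n, m). N \<le> n \<and> N \<le> m}. a (s (fst p)) (s (snd p)))"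
      proof (rule INF_greatest)
        fix p assume "p \<in> {(n, m). N \<le> n \<and> N \<le> m}"
        then obtain n m where p: "p = (n, m)" "N \<le> n" "N \<le> m" by auto
        have "t (u N) (u N) \<le> t (psi (s n)) (phi (s m))"
          using tmono monoD[OF umono] p uphi upsi order_trans by metis
        also have "\<dots> \<le> a (s n) (s m)" using co sX by blast
        finally show "t (u N) (u N) \<le> a (s (fst p)) (s (snd p))" using p by simp
      qed
    qed
    finally show "top \<le> (SUP N. INF p\<in>{(n, m). N \<le> n \<and> N \<le> m}. a (s (fst p)) (s (snd p)))" .
  qed
  have phieq: "phi x = phi_seq a s x" if x: "x \<in> X" for x
  proof (rule antisym)
    have "phi x = t (SUP N. u N) (phi x)" using usup tid1 by simp
    also have "\<dots> = (SUP N. t (u N) (phi x))" by (simp only: tdist2)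
    also have "\<dots> \<le> phi_seq a s x" unfolding phi_seq_def
    proof (rule SUP_mono')
      fix N
      show "t (u N) (phi x) \<le> (INF n\<in>{N::nat..}. a (s n) x)"
      proof (rule INF_greatest)
        fix n assume "n \<in> {N::nat..}"
        then have "u N \<le> psi (s n)" using monoD[OF umono] upsi order_trans by fastforce
        then have "t (u N) (phi x) \<le> t (psi (s n)) (phi x)" using tmono by blast
        also have "\<dots> \<le> a (s n) x" using co sX x by blast
        finally show "t (u N) (phi x) \<le> a (s n) x" .
      qed
    qed
    finally show "phi x \<le> phi_seq a s x" .
    show "phi_seq a s x \<le> phi x" unfolding phi_seq_def
    proof (rule SUP_least)
      fix N
      let ?c = "INF n\<in>{N::nat..}. a (s n) x"
      have "?c = t (SUP m. u m) ?c" using usup tid1 by simp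
      also have "\<dots> = (SUP m. t (u m) ?c)" by (simp only: tdist2)
      also have "\<dots> \<le> phi x"
      proof (rule SUP_least)
        fix m
        let ?M = "max m N"
        have "t (u m) ?c \<le> t (phi (s ?M)) (a (s ?M) x)"
          by (rule tmono; (rule INF_lower)?; (simp)?) (meson monoD[OF umono] max.cobounded1 uphi order_trans)
        also have "\<dots> \<le> phi x" using mf sX x by blast
        finally show "t (u m) ?c \<le> phi x" .
      qed
      finally show "?c \<le> phi x" .
    qed
  qed
  have psieq: "psi x = psi_seq a s x" if x: "x \<in> X" for x
  proof (rule antisym)
    have "psi x = t (psi x) (SUP N. u N)" using usup tid2 by simp
    also have "\<dots> = (SUP N. t (psi x) (u N))" by (simp only: tdist)
    also have "\<dots> \<le> psi_seq a s x" unfolding psi_seq_def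
    proof (rule SUP_mono')
      fix N
      show "t (psi x) (u N) \<le> (INF n\<in>{N::nat..}. a x (s n))"
      proof (rule INF_greatest)
        fix n assume "n \<in> {N::nat..}"
        then have "u N \<le> phi (s n)" using monoD[OF umono] uphi order_trans by fastforce
        then have "t (psi x) (u N) \<le> t (psi x) (phi (s n))" using tmono by blast
        also have "\<dots> \<le> a x (s n)" using co sX x by blast
        finally show "t (psi x) (u N) \<le> a x (s n)" .
      qed
    qed
    finally show "psi x \<le> psi_seq a s x" .
    show "psi_seq a s x \<le> psi x" unfolding psi_seq_def
    proof (rule SUP_least)
      fix N
      let ?c = "INF n\<in>{N::nat..}. a x (s n)"
      have "?c = t ?c (SUP m. u m)" using usup tid2 by simp
      also have "\<dots> = (SUP m. t ?c (u m))" by (simp only: tdist)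
      also have "\<dots> \<le> psi x"
      proof (rule SUP_least)
        fix m
        let ?M = "max m N"
        have "t ?c (u m) \<le> t (a x (s ?M)) (psi (s ?M))"
          by (rule tmono; (rule INF_lower)?; (simp)?) (meson monoD[OF umono] max.cobounded1 upsi order_trans)
        also have "\<dots> \<le> psi x" using mt sX x by blast
        finally show "t ?c (u m) \<le> psi x" .
      qed
      finally show "?c \<le> psi x" .
    qed
  qed
  show ?thesis using sX cau phieq psieq by blast
qed

end

definition cseq :: "('x \<Rightarrow> 'x \<Rightarrow> 'v::complete_lattice) \<Rightarrow> (nat \<Rightarrow> 'x) \<Rightarrow> nat \<Rightarrow> 'v" where
  "cseq a s N = (INF p\<in>{(n, m). N \<le> n \<and> N \<le> m}. a (s (fst p)) (s (snd p)))"

lemma cseq_mono: "mono (cseq a s)"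
  unfolding cseq_def by (rule monoI, rule INF_superset_mono) auto

lemma cseq_sup: "is_cauchy top a s \<Longrightarrow> (SUP N. cseq a s N) = top"
  unfolding is_cauchy_def cauchy_val_def cseq_def by (simp add: top_le)

lemma cseq_le: "N \<le> n \<Longrightarrow> N \<le> m \<Longrightarrow> cseq a s N \<le> a (s n) (s m)"
  unfolding cseq_def by (rule INF_lower2[of "(n,m)"]) auto

lemma cseq_phi: "cseq a s m \<le> phi_seq a s (s m)"
  unfolding phi_seq_def
  by (rule SUP_upper2[of m], simp, rule INF_greatest, rule cseq_le) auto

lemma cseq_psi: "cseq a s m \<le> psi_seq a s (s m)"
  unfolding psi_seq_def
  by (rule SUP_upper2[of m], simp, rule INF_greatest, rule cseq_le) auto

lemma inf_big: "infinite (M::nat set) \<Longrightarrow> \<exists>n\<in>M. N \<le> n"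
  by (meson finite_lessThan finite_subset not_le subsetI lessThan_iff)

lemma inf_atLeast: "infinite {N::nat..}"
proof
  assume "finite {N::nat..}"
  then obtain m where "\<forall>n\<in>{N::nat..}. n \<le> m" using finite_nat_set_iff_bounded_le by blast
  then have "Suc (max m N) \<le> m" by (metis atLeast_iff le_SucI max.cobounded2)
  then show False by simp
qed

context
  fixes t :: "'v::complete_lattice \<Rightarrow> 'v \<Rightarrow> 'v"
  assumes Q: "quantale t top"
begin

lemma seq_adjoint:
  fixes s :: "nat \<Rightarrow> 'x"
  assumes V: "vcat t top X a" and sX: "range s \<subseteq> X" and cau: "is_cauchy top a s"
  shows "adjoint t top X a (phi_seq a s) (psi_seq a s)"
proof -
  have tr: "\<And>x y z. x \<in> X \<Longrightarrow> y \<in> X \<Longrightarrow> z \<in> X \<Longrightarrow> t (a x y) (a y z) \<le> a x z"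
    using V unfolding vcat_def by blast
  have sXn: "s n \<in> X" for n using sX by auto
  have m1: "module_from_E t top X a (phi_seq a s)"
    unfolding module_from_E_def
  proof (intro conjI ballI)
    fix y assume "y \<in> X"
    show "t top (phi_seq a s y) \<le> phi_seq a s y" by (simp add: tid1[OF Q])
  next
    fix y y' assume y: "y \<in> X" and y': "y' \<in> X"
    have "t (phi_seq a s y) (a y y') = (SUP N. t (INF n\<in>{N::nat..}. a (s n) y) (a y y'))"
      unfolding phi_seq_def by (simp only: tdist2[OF Q])
    also have "\<dots> \<le> phi_seq a s y'" unfolding phi_seq_def
    proof (rule SUP_mono', rule INF_greatest)
      fix N n assume "n \<in> {N::nat..}"
      then have "t (INF n\<in>{N::nat..}. a (s n) y) (a y y') \<le> t (a (s n) y) (a y y')"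
        by (intro tmono[OF Q] INF_lower) auto
      also have "\<dots> \<le> a (s n) y'" using tr sXn y y' by blast
      finally show "t (INF n\<in>{N::nat..}. a (s n) y) (a y y') \<le> a (s n) y'" .
    qed
    finally show "t (phi_seq a s y) (a y y') \<le> phi_seq a s y'" .
  qed
  have m2: "module_to_E t top X a (psi_seq a s)"
    unfolding module_to_E_def
  proof (intro conjI ballI)
    fix y assume "y \<in> X"
    show "t (psi_seq a s y) top \<le> psi_seq a s y" by (simp add: tid2[OF Q])
  next
    fix x x' assume x: "x \<in> X" and x': "x' \<in> X"
    have "t (a x x') (psi_seq a s x') = (SUP N. t (a x x') (INF n\<in>{N::nat..}. a x' (s n)))"
      unfolding psi_seq_def by (simp only: tdist[OF Q])
    also have "\<dots> \<le> psi_seq a s x" unfolding psi_seq_def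
    proof (rule SUP_mono', rule INF_greatest)
      fix N n assume "n \<in> {N::nat..}"
      then have "t (a x x') (INF n\<in>{N::nat..}. a x' (s n)) \<le> t (a x x') (a x' (s n))"
        by (intro tmono[OF Q] INF_lower) auto
      also have "\<dots> \<le> a x (s n)" using tr sXn x x' by blast
      finally show "t (a x x') (INF n\<in>{N::nat..}. a x' (s n)) \<le> a x (s n)" .
    qed
    finally show "t (a x x') (psi_seq a s x') \<le> psi_seq a s x" .
  qed
  have ks: "top \<le> (SUP y\<in>X. t (phi_seq a s y) (psi_seq a s y))"
  proof -
    have "top = (SUP N. t (cseq a s N) (cseq a s N))"
      using seqtop[OF Q cseq_mono cseq_sup[OF cau]] by simp
    also have "\<dots> \<le> (SUP y\<in>X. t (phi_seq a s y) (psi_seq a s y))"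
    proof (rule SUP_mono)
      fix N
      show "\<exists>y\<in>X. t (cseq a s N) (cseq a s N) \<le> t (phi_seq a s y) (psi_seq a s y)"
        using sXn[of N] tmono[OF Q cseq_psi cseq_phi] by blast
    qed
    finally show ?thesis .
  qed
  have co: "\<forall>x\<in>X. \<forall>y\<in>X. t (psi_seq a s x) (phi_seq a s y) \<le> a x y"
  proof (intro ballI)
    fix x y assume x: "x \<in> X" and y: "y \<in> X"
    have "t (psi_seq a s x) (phi_seq a s y) =
      (SUP N. SUP M. t (INF n\<in>{N::nat..}. a x (s n)) (INF n\<in>{M::nat..}. a (s n) y))"
      unfolding psi_seq_def phi_seq_def by (simp only: tdist2[OF Q]) (simp only: tdist[OF Q])
    also have "\<dots> \<le> a x y"
    proof (intro SUP_least)
      fix N M :: nat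
      let ?K = "max N M"
      have "t (INF n\<in>{N::nat..}. a x (s n)) (INF n\<in>{M::nat..}. a (s n) y) \<le> t (a x (s ?K)) (a (s ?K) y)"
        by (intro tmono[OF Q] INF_lower) auto
      also have "\<dots> \<le> a x y" using tr sXn x y by blast
      finally show "t (INF n\<in>{N::nat..}. a x (s n)) (INF n\<in>{M::nat..}. a (s n) y) \<le> a x y" .
    qed
    finally show "t (psi_seq a s x) (phi_seq a s y) \<le> a x y" .
  qed
  show ?thesis unfolding adjoint_def using m1 m2 ks co by blast
qed

lemma part2a:
  fixes s :: "nat \<Rightarrow> 'x"
  assumes V: "vcat t top X a" and cc: "cauchy_complete t top X a"
    and sX: "range s \<subseteq> X" and cau: "is_cauchy top a s"
  shows "\<exists>x\<in>X. converges_to t top X a s x"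
proof -
  have adj: "adjoint t top X a (phi_seq a s) (psi_seq a s)" using seq_adjoint[OF V sX cau] .
  then obtain x where x: "x \<in> X" and phx: "\<forall>y\<in>X. phi_seq a s y = a x y"
    using cc unfolding cauchy_complete_def by blast
  have sXn: "s n \<in> X" for n using sX by auto
  have co: "\<forall>x\<in>X. \<forall>y\<in>X. t (psi_seq a s x) (phi_seq a s y) \<le> a x y"
    using adj unfolding adjoint_def by blast
  have axx: "a x x = top" using V x unfolding vcat_def by (simp add: top_le)
  have psle: "psi_seq a s y \<le> a y x" if y: "y \<in> X" for y
    using co y x phx axx tid2[OF Q] by metis
  have "converges_to t top X a s x"
    unfolding converges_to_def vclosure_def
  proof (intro allI impI CollectI conjI)
    fix M :: "nat set" assume inf: "infinite M"
    show "x \<in> X" by fact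
    have "top = (SUP N. t (cseq a s N) (cseq a s N))"
      using seqtop[OF Q cseq_mono cseq_sup[OF cau]] by simp
    also have "\<dots> \<le> (SUP n\<in>M. t (a x (s n)) (a (s n) x))"
    proof (rule SUP_mono)
      fix N
      obtain n where n: "n \<in> M" "N \<le> n" using inf_big[OF inf, of N] by blast
      have "t (cseq a s N) (cseq a s N) \<le> t (cseq a s n) (cseq a s n)"
        using tmono[OF Q] monoD[OF cseq_mono n(2)] by blast
      also have "\<dots> \<le> t (a x (s n)) (a (s n) x)"
        using tmono[OF Q] cseq_phi[of a s n] cseq_psi[of a s n] phx psle sXn order_trans by metis
      finally show "\<exists>m\<in>M. t (cseq a s N) (cseq a s N) \<le> t (a x (s m)) (a (s m) x)" using n by blast
    qed
    finally show "top \<le> (SUP y\<in>s ` M. t (a x y) (a y x))" by (simp add: image_image)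
  qed
  then show ?thesis using x by blast
qed

lemma part2b:
  fixes s :: "nat \<Rightarrow> 'x"
  assumes V: "vcat t top X a" and sX: "range s \<subseteq> X" and cau: "is_cauchy top a s"
    and mf: "module_from_E t top X a phi"
    and pe: "\<forall>y\<in>X. phi y = phi_seq a s y"
    and x: "x \<in> X" and conv: "converges_to t top X a s x"
  shows "\<forall>y\<in>X. phi y = a x y"
proof
  fix y assume y: "y \<in> X"
  have tr: "\<And>x y z. x \<in> X \<Longrightarrow> y \<in> X \<Longrightarrow> z \<in> X \<Longrightarrow> t (a x y) (a y z) \<le> a x z"
    using V unfolding vcat_def by blast
  have mfa: "\<forall>y\<in>X. \<forall>y'\<in>X. t (phi y) (a y y') \<le> phi y'" using mf unfolding module_from_E_def by blast
  have sXn: "s n \<in> X" for n using sX by auto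
  have tail: "top \<le> (SUP n\<in>{N::nat..}. t (a x (s n)) (a (s n) x))" for N
    using conv inf_atLeast[of N] unfolding converges_to_def vclosure_def by (auto simp add: image_image)
  show "phi y = a x y"
  proof (rule antisym)
    show "phi y \<le> a x y" unfolding pe[rule_format, OF y] phi_seq_def
    proof (rule SUP_least)
      fix N
      let ?d = "INF n\<in>{N::nat..}. a (s n) y"
      have "?d = t top ?d" by (simp add: tid1[OF Q])
      also have "\<dots> \<le> t (SUP n\<in>{N::nat..}. t (a x (s n)) (a (s n) x)) ?d"
        using tmono[OF Q] tail by (simp add: top_le)
      also have "\<dots> = (SUP n\<in>{N::nat..}. t (t (a x (s n)) (a (s n) x)) ?d)" by (simp only: tdist2[OF Q])
      also have "\<dots> \<le> a x y"
      proof (rule SUP_least)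
        fix n assume n: "n \<in> {N::nat..}"
        have "t (t (a x (s n)) (a (s n) x)) ?d \<le> t (a x (s n)) (a (s n) y)"
          using n by (intro tmono[OF Q] tle1[OF Q] INF_lower) auto
        also have "\<dots> \<le> a x y" using tr x y sXn by blast
        finally show "t (t (a x (s n)) (a (s n) x)) ?d \<le> a x y" .
      qed
      finally show "?d \<le> a x y" .
    qed
    have phx: "top \<le> phi x"
    proof -
      have "top = (SUP N. cseq a s N)" using cseq_sup[OF cau] by simp
      also have "\<dots> \<le> (SUP n. t (cseq a s n) (a (s n) x))"
      proof (rule SUP_least)
        fix N
        have "cseq a s N = t (cseq a s N) top" by (simp add: tid2[OF Q])
        also have "\<dots> \<le> t (cseq a s N) (SUP n\<in>{N::nat..}. a (s n) x)"
        proof (rule tmono[OF Q], rule order_trans[OF tail[of N]], rule SUP_mono)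
          fix n assume "n \<in> {N::nat..}"
          then show "\<exists>m\<in>{N::nat..}. t (a x (s n)) (a (s n) x) \<le> a (s m) x" using tle2[OF Q] by blast
        qed simp
        also have "\<dots> = (SUP n\<in>{N::nat..}. t (cseq a s N) (a (s n) x))" by (simp only: tdist[OF Q])
        also have "\<dots> \<le> (SUP n. t (cseq a s n) (a (s n) x))"
        proof (rule SUP_mono)
        fix n assume "n \<in> {N::nat..}"
        then show "\<exists>m\<in>UNIV. t (cseq a s N) (a (s n) x) \<le> t (cseq a s m) (a (s m) x)"
          using tmono[OF Q] monoD[OF cseq_mono] by (metis UNIV_I atLeast_iff order_refl)
      qed
        finally show "cseq a s N \<le> (SUP n. t (cseq a s n) (a (s n) x))" .
      qed
      also have "\<dots> \<le> phi x"
      proof (rule SUP_least)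
        fix n
        have "t (cseq a s n) (a (s n) x) \<le> t (phi (s n)) (a (s n) x)"
          using tmono[OF Q] cseq_phi[of a s n] pe sXn by (metis order_refl)
        also have "\<dots> \<le> phi x" using mfa sXn x by blast
        finally show "t (cseq a s n) (a (s n) x) \<le> phi x" .
      qed
      finally show ?thesis .
    qed
    have "a x y = t top (a x y)" by (simp add: tid1[OF Q])
    also have "\<dots> \<le> t (phi x) (a x y)" using tmono[OF Q] phx by blast
    also have "\<dots> \<le> phi y" using mfa x y by blast
    finally show "a x y \<le> phi y" .
  qed
qed

end

theorem theorem3p19:
  fixes t :: "'v::complete_lattice \<Rightarrow> 'v \<Rightarrow> 'v" and k :: 'v
    and u :: "nat \<Rightarrow> 'v" and X :: "'x set" and a :: "'x \<Rightarrow> 'x \<Rightarrow> 'v"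
  assumes "quantale t k" and "k = top"
    and "(SUP n. u n) = k" and "\<forall>n. totally_below (u n) k" and "\<forall>n. u n \<le> u (Suc n)"
    and "vcat t k X a"
  shows "(\<forall>phi psi. adjoint t k X a phi psi \<longrightarrow>
            (\<exists>s. range s \<subseteq> X \<and> is_cauchy k a s \<and>
                 (\<forall>x\<in>X. phi x = phi_seq a s x) \<and> (\<forall>x\<in>X. psi x = psi_seq a s x)))
       \<and> (cauchy_complete t k X a \<longleftrightarrow>
            (\<forall>s. range s \<subseteq> X \<longrightarrow> is_cauchy k a s \<longrightarrow> (\<exists>x\<in>X. converges_to t k X a s x)))"
proof -
  have Q: "quantale t top" using assms(1,2) by simp
  have us: "(SUP n. u n) = top" using assms(2,3) by simp
  have ut: "\<forall>n. totally_below (u n) top" using assms(2,4) by simp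
  have um: "mono u" using assms(5) by (simp add: mono_iff_le_Suc)
  have V: "vcat t top X a" using assms(2,6) by simp
  have P1: "\<forall>phi psi. adjoint t top X a phi psi \<longrightarrow>
            (\<exists>s. range s \<subseteq> X \<and> is_cauchy top a s \<and>
                 (\<forall>x\<in>X. phi x = phi_seq a s x) \<and> (\<forall>x\<in>X. psi x = psi_seq a s x))"
    using part1[OF Q us ut um V] by blast
  have P2: "cauchy_complete t top X a \<longleftrightarrow>
            (\<forall>s. range s \<subseteq> X \<longrightarrow> is_cauchy top a s \<longrightarrow> (\<exists>x\<in>X. converges_to t top X a s x))"
  proof
    assume "cauchy_complete t top X a"
    then show "\<forall>s. range s \<subseteq> X \<longrightarrow> is_cauchy top a s \<longrightarrow> (\<exists>x\<in>X. converges_to t top X a s x)"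
      using part2a[OF Q V] by blast
  next
    assume C: "\<forall>s. range s \<subseteq> X \<longrightarrow> is_cauchy top a s \<longrightarrow> (\<exists>x\<in>X. converges_to t top X a s x)"
    show "cauchy_complete t top X a" unfolding cauchy_complete_def
    proof (intro allI impI)
      fix phi assume "\<exists>psi. adjoint t top X a phi psi"
      then obtain psi where adj: "adjoint t top X a phi psi" by blast
      then obtain s where s: "range s \<subseteq> X" "is_cauchy top a s" "\<forall>x\<in>X. phi x = phi_seq a s x"
        using P1 by blast
      then obtain x where x: "x \<in> X" "converges_to t top X a s x" using C by blast
      have mf: "module_from_E t top X a phi" using adj unfolding adjoint_def by blast
      show "\<exists>x\<in>X. \<forall>y\<in>X. phi y = a x y"
        using part2b[OF Q V s(1) s(2) mf s(3) x] x(1) by blast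
    qed
  qed
  show ?thesis using P1 P2 assms(2) by simp
qed

end
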